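(* Let $\mathcal{H}_O\simeq\mathbb{C}^{d_O}$ and $\mathcal{H}_K\simeq\mathbb{C}^{d_K}$, let $H=\sum_{n=1}^{d_Od_K}\lambda_n^{\uparrow}|\xi_n\rangle\langle\xi_n|$ be a Hamiltonian on $\mathcal{H}_O\otimes\mathcal{H}_K$ with $\lambda_1^\uparrow\leqslant\dots\leqslant\lambda^\uparrow_{d_Od_K}$ and $\{|\xi_n\rangle\}$ an orthonormal eigenbasis, let $\beta\in(0,\infty)$ and $\rho(\beta)=e^{-\beta H}/\mathrm{tr}[e^{-\beta H}]=\sum_n p_n^{\downarrow}|\xi_n\rangle\langle\xi_n|$. Fix a unit vector $|\Psi\rangle\in\mathcal{H}_O$. Let $\mathcal{U}_{\mathrm{maj}}$ be the set of unitaries $U$ on $\mathcal{H}_O\otimes\mathcal{H}_K$ for which there is an orthonormal basis $\{|\phi_j\rangle\}_{j=1}^{d_K}$ of $\mathcal{H}_K$ with $U|\xi_n\rangle=|\Psi\rangle\otimes|\phi_n\rangle$ for all $n\in\{1,\dots,d_K\}$ (these unitaries maximise $\langle\Psi|\mathrm{tr}_K[U\rho(\beta)U^\dagger]|\Psi\rangle$). For a unitary $U$ define $\Delta Q(U)=\mathrm{tr}[H(U\rho(\beta)U^\dagger-\rho(\beta))]$ and the vector $\mathbf{q}^U\in\mathbb{R}^{d_Od_K}$ by $q_n^U=\sum_{m=1}^{d_Od_K}p_m^{\downarrow}|\langle\xi_n|U|\xi_m\rangle|^2$. Suppose $U^1\in\mathcal{U}_{\mathrm{maj}}$ satisfies $q_1^{U^1}\geqslant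 q_2^{U^1}\geqslant\dots\geqslant q^{U^1}_{d_Od_K}$ and $(\mathbf{q}^{U})^{\downarrow}\prec(\mathbf{q}^{U^1})^{\downarrow}$ for all $U\in\mathcal{U}_{\mathrm{maj}}$. Then $\Delta Q(U^1)\leqslant\Delta Q(U)$ for all $U\in\mathcal{U}_{\mathrm{maj}}$.
   Context: $\mathrm{tr}_K$ denotes the partial trace over $\mathcal{H}_K$. For $\mathbf{a}\in\mathbb{R}^N$, $\mathbf{a}^\downarrow$ is its non-increasing rearrangement, and $\mathbf{a}\prec\mathbf{b}$ means $\sum_{i=1}^k a_i^\downarrow\leqslant\sum_{i=1}^k b_i^\downarrow$ for all $k$ with equality at $k=N$. *)

theory Defs
  imports "Jordan_Normal_Form.Matrix"
begin

definition cinner :: "complex vec \<Rightarrow> complex vec \<Rightarrow> complex" where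
  "cinner x y = (\<Sum>i<dim_vec x. cnj (x $ i) * y $ i)"

definition adj :: "complex mat \<Rightarrow> complex mat" where
  "adj A = mat (dim_col A) (dim_row A) (\<lambda>(i,j). cnj (A $$ (j,i)))"

definition unitary :: "nat \<Rightarrow> complex mat \<Rightarrow> bool" where
  "unitary N U \<longleftrightarrow> U \<in> carrier_mat N N \<and> U * adj U = 1\<^sub>m N \<and> adj U * U = 1\<^sub>m N"

definition onb :: "nat \<Rightarrow> (nat \<Rightarrow> complex vec) \<Rightarrow> bool" where
  "onb N v \<longleftrightarrow> (\<forall>i<N. dim_vec (v i) = N) \<and>
     (\<forall>i<N. \<forall>j<N. cinner (v i) (v j) = (if i = j then 1 else 0))"

definition spec_sum :: "nat \<Rightarrow> (nat \<Rightarrow> real) \<Rightarrow> (nat \<Rightarrow> complex vec) \<Rightarrow> complex mat" where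
  "spec_sum N c v = mat N N (\<lambda>(i,j). \<Sum>n<N. complex_of_real (c n) * (v n $ i) * cnj (v n $ j))"

(* tensor product of vectors, C^a (x) C^b = C^(a*b), index (i,k) |-> i*b + k *)
definition kron :: "complex vec \<Rightarrow> complex vec \<Rightarrow> complex vec" where
  "kron x y = vec (dim_vec x * dim_vec y) (\<lambda>i. x $ (i div dim_vec y) * y $ (i mod dim_vec y))"

definition mtrace :: "complex mat \<Rightarrow> complex" where
  "mtrace A = (\<Sum>i<dim_row A. A $$ (i,i))"

definition exp_mat :: "complex mat \<Rightarrow> complex mat" where
  "exp_mat A = mat (dim_row A) (dim_col A) (\<lambda>(i,j). \<Sum>k. (A ^\<^sub>m k) $$ (i,j) / of_nat (fact k))"

definition gibbs :: "real \<Rightarrow> complex mat \<Rightarrow> complex mat" where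
  "gibbs \<beta> H = (1 / mtrace (exp_mat ((- complex_of_real \<beta>) \<cdot>\<^sub>m H))) \<cdot>\<^sub>m exp_mat ((- complex_of_real \<beta>) \<cdot>\<^sub>m H)"

definition decr :: "real list \<Rightarrow> real list" where
  "decr a = rev (sort a)"

definition majorized :: "real list \<Rightarrow> real list \<Rightarrow> bool" where
  "majorized a b \<longleftrightarrow> length a = length b \<and>
     (\<forall>k\<le>length a. sum_list (take k (decr a)) \<le> sum_list (take k (decr b))) \<and>
     sum_list a = sum_list b"

definition Umaj :: "nat \<Rightarrow> nat \<Rightarrow> (nat \<Rightarrow> complex vec) \<Rightarrow> complex vec \<Rightarrow> complex mat set" where
  "Umaj dO dK xi Psi = {U. unitary (dO * dK) U \<and>
     (\<exists>phi. onb dK phi \<and> (\<forall>n<dK. U *\<^sub>v xi n = kron Psi (phi n)))}"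

definition DeltaQ :: "complex mat \<Rightarrow> complex mat \<Rightarrow> complex mat \<Rightarrow> complex" where
  "DeltaQ H \<rho> U = mtrace (H * (U * \<rho> * adj U - \<rho>))"

definition qvec :: "nat \<Rightarrow> (nat \<Rightarrow> real) \<Rightarrow> (nat \<Rightarrow> complex vec) \<Rightarrow> complex mat \<Rightarrow> real list" where
  "qvec N p xi U = map (\<lambda>n. \<Sum>m<N. p m * (cmod (cinner (xi n) (U *\<^sub>v xi m)))\<^sup>2) [0..<N]"

end

theory Submission
  imports Defs "HOL-Library.Multiset"
begin


fun dins :: "real \<Rightarrow> real list \<Rightarrow> real list" where
  "dins x [] = [x]"
| "dins x (y#s) = (if y \<le> x then x#y#s else y # dins x s)"

lemma dins_take: "k \<ge> 1 \<Longrightarrow> x + sum_list (take (k-1) s) \<le> sum_list (take k (dins x s))"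
proof (induction s arbitrary: k)
  case Nil then show ?case by (cases k) auto
next
  case (Cons y s)
  show ?case
  proof (cases "y \<le> x")
    case True then show ?thesis using Cons.prems by (cases k) auto
  next
    case False
    show ?thesis
    proof (cases "k = 1")
      case True then show ?thesis using False by simp
    next
      case k: False
      then obtain j where j: "k = Suc (Suc j)" using Cons.prems
        by (metis One_nat_def Suc_le_D le_SucE not0_implies_Suc)
      have "x + sum_list (take j s) \<le> sum_list (take (Suc j) (dins x s))"
        using Cons.IH[of "Suc j"] by simp
      then show ?thesis using False j by simp
    qed
  qed
qed

lemma dins_mset: "mset (dins x s) = add_mset x (mset s)"
  by (induction s) auto

lemma dins_set: "set (dins x s) = insert x (set s)"
  by (induction s) auto

lemma dins_sorted: "sorted_wrt (\<ge>) s \<Longrightarrow> sorted_wrt (\<ge>) (dins x s)"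
  by (induction s) (auto simp: dins_set)

definition dsort :: "real list \<Rightarrow> real list" where "dsort a = foldr dins a []"

lemma dsort_props: "mset (dsort a) = mset a \<and> sorted_wrt (\<ge>) (dsort a)"
  unfolding dsort_def by (induction a) (auto simp: dins_mset dins_sorted)

lemma decr_of_sorted: assumes "mset b = mset a" "sorted_wrt (\<ge>) b" shows "decr a = b"
proof -
  have "sort a = rev b"
    by (rule properties_for_sort) (use assms in \<open>auto simp: sorted_wrt_rev\<close>)
  then show ?thesis by (simp add: decr_def)
qed

lemma decr_dsort: "decr a = dsort a"
  using dsort_props decr_of_sorted by metis

lemma take_le_decr: "sum_list (take k a) \<le> sum_list (take k (decr a))"
  unfolding decr_dsort
proof (induction a arbitrary: k)
  case Nil then show ?case by (simp add: dsort_def)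
next
  case (Cons x a)
  show ?case
  proof (cases k)
    case 0 then show ?thesis by simp
  next
    case (Suc j)
    have "sum_list (take k (x#a)) = x + sum_list (take j a)" using Suc by simp
    also have "\<dots> \<le> x + sum_list (take j (dsort a))" using Cons.IH by simp
    also have "\<dots> \<le> sum_list (take k (dins x (dsort a)))"
      using dins_take[of k x "dsort a"] Suc by simp
    finally show ?thesis by (simp add: dsort_def)
  qed
qed

lemma abel_aux:
  fixes lam x :: "nat \<Rightarrow> real"
  assumes mono: "\<And>n m. n \<le> m \<Longrightarrow> m < N \<Longrightarrow> lam n \<le> lam m"
    and part: "\<And>k. k \<le> N \<Longrightarrow> (\<Sum>n<k. x n) \<le> 0"
  shows "k \<le> N \<Longrightarrow> (\<forall>n<k. lam n \<le> \<mu>) \<Longrightarrow> \<mu> * (\<Sum>n<k. x n) \<le> (\<Sum>n<k. lam n * x n)"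
proof (induction k arbitrary: \<mu>)
  case 0 then show ?case by simp
next
  case (Suc k)
  have ih: "lam k * (\<Sum>n<k. x n) \<le> (\<Sum>n<k. lam n * x n)"
    using Suc.IH[of "lam k"] Suc.prems mono by auto
  have neg: "(\<Sum>n<Suc k. x n) \<le> 0" using part Suc.prems by blast
  have "\<mu> * (\<Sum>n<Suc k. x n) \<le> lam k * (\<Sum>n<Suc k. x n)"
    using neg Suc.prems by (intro mult_right_mono_neg) auto
  also have "\<dots> = lam k * (\<Sum>n<k. x n) + lam k * x k" by (simp add: algebra_simps)
  also have "\<dots> \<le> (\<Sum>n<Suc k. lam n * x n)" using ih by simp
  finally show ?case .
qed

lemma abel:
  fixes lam a b :: "nat \<Rightarrow> real"
  assumes mono: "\<And>n m. n \<le> m \<Longrightarrow> m < N \<Longrightarrow> lam n \<le> lam m"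
    and part: "\<And>k. k \<le> N \<Longrightarrow> (\<Sum>n<k. a n) \<le> (\<Sum>n<k. b n)"
    and eq: "(\<Sum>n<N. a n) = (\<Sum>n<N. b n)"
  shows "(\<Sum>n<N. lam n * b n) \<le> (\<Sum>n<N. lam n * a n)"
proof -
  have "lam (N-1) * (\<Sum>n<N. a n - b n) \<le> (\<Sum>n<N. lam n * (a n - b n))"
  proof (rule abel_aux[where x="\<lambda>n. a n - b n"])
    show "(\<Sum>n<k. a n - b n) \<le> 0" if "k \<le> N" for k using part[OF that] by (simp add: sum_subtractf)
    show "\<forall>n<N. lam n \<le> lam (N - 1)" using mono by auto
  qed (use mono in auto)
  then show ?thesis using eq by (simp add: sum_subtractf algebra_simps)
qed

lemma sum_list_take_nth: "k \<le> length xs \<Longrightarrow> sum_list (take k xs) = (\<Sum>n<k. xs ! n)"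
  by (simp add: sum_list_sum_nth atLeast0LessThan min_def)

lemma maj_ineq:
  fixes lam :: "nat \<Rightarrow> real"
  assumes mono: "\<And>n m. n \<le> m \<Longrightarrow> m < N \<Longrightarrow> lam n \<le> lam m"
    and len: "length a = N"
    and sb: "sorted_wrt (\<ge>) b"
    and maj: "majorized a b"
  shows "(\<Sum>n<N. lam n * b ! n) \<le> (\<Sum>n<N. lam n * a ! n)"
proof -
  have lb: "length b = N" using maj len by (simp add: majorized_def)
  have db: "decr b = b" using decr_of_sorted[of b b] sb by simp
  show ?thesis
  proof (rule abel[OF mono])
    fix k assume k: "k \<le> N"
    have "sum_list (take k a) \<le> sum_list (take k (decr a))" by (rule take_le_decr)
    also have "\<dots> \<le> sum_list (take k b)" using maj k len db by (simp add: majorized_def)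
    finally show "(\<Sum>n<k. a ! n) \<le> (\<Sum>n<k. b ! n)"
      using k len lb by (simp add: sum_list_take_nth)
  next
    show "(\<Sum>n<N. a ! n) = (\<Sum>n<N. b ! n)"
      using maj len lb sum_list_take_nth[of N a] sum_list_take_nth[of N b]
      by (simp add: majorized_def)
  qed
qed



lemma cinner_cnj: "dim_vec x = dim_vec y \<Longrightarrow> cinner x y = cnj (cinner y x)"
  by (simp add: cinner_def mult.commute)

lemma cinner_adj:
  assumes A: "A \<in> carrier_mat N N" and x: "dim_vec x = N" and y: "dim_vec y = N"
  shows "cinner x (A *\<^sub>v y) = cinner (adj A *\<^sub>v x) y"
proof -
  have "cinner x (A *\<^sub>v y) = (\<Sum>i<N. cnj (x $ i) * (\<Sum>j<N. A $$ (i,j) * y $ j))"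
    using A x y by (simp add: cinner_def scalar_prod_def atLeast0LessThan)
  also have "\<dots> = (\<Sum>j<N. (\<Sum>i<N. A $$ (i,j) * cnj (x $ i)) * y $ j)"
    apply (simp add: sum_distrib_left sum_distrib_right)
    apply (subst sum.swap)
    apply (simp add: mult_ac)
    done
  also have "\<dots> = cinner (adj A *\<^sub>v x) y"
    using A x y by (simp add: cinner_def adj_def scalar_prod_def atLeast0LessThan cnj_sum mult_ac)
  finally show ?thesis .
qed

lemma mtrace_spec_sum:
  assumes M: "M \<in> carrier_mat N N" and v: "\<And>n. n < N \<Longrightarrow> dim_vec (v n) = N"
  shows "mtrace (spec_sum N c v * M) = (\<Sum>n<N. complex_of_real (c n) * cinner (v n) (M *\<^sub>v v n))"
proof -
  have "mtrace (spec_sum N c v * M) =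
     (\<Sum>i<N. \<Sum>j<N. (\<Sum>n<N. complex_of_real (c n) * (v n $ i) * cnj (v n $ j)) * M $$ (j,i))"
    using M by (simp add: mtrace_def spec_sum_def scalar_prod_def atLeast0LessThan)
  also have "\<dots> = (\<Sum>i<N. \<Sum>j<N. \<Sum>n<N. complex_of_real (c n) * (cnj (v n $ j) * (M $$ (j,i) * v n $ i)))"
    by (simp add: sum_distrib_right sum_distrib_left mult_ac)
  also have "\<dots> = (\<Sum>n<N. \<Sum>j<N. \<Sum>i<N. complex_of_real (c n) * (cnj (v n $ j) * (M $$ (j,i) * v n $ i)))"
    apply (subst sum.swap) apply (subst (2) sum.swap) apply (subst sum.swap) ..
  also have "\<dots> = (\<Sum>n<N. complex_of_real (c n) * (\<Sum>j<N. cnj (v n $ j) * (\<Sum>i<N. M $$ (j,i) * v n $ i)))"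
    by (simp add: sum_distrib_left)
  also have "\<dots> = (\<Sum>n<N. complex_of_real (c n) * cinner (v n) (M *\<^sub>v v n))"
    using M v by (intro sum.cong refl) (simp add: cinner_def scalar_prod_def atLeast0LessThan)
  finally show ?thesis .
qed

lemma quad_spec_sum:
  assumes w: "dim_vec w = N" and v: "\<And>n. n < N \<Longrightarrow> dim_vec (v n) = N"
  shows "cinner w (spec_sum N c v *\<^sub>v w) = complex_of_real (\<Sum>m<N. c m * (cmod (cinner (v m) w))\<^sup>2)"
proof -
  have "cinner w (spec_sum N c v *\<^sub>v w) =
      (\<Sum>i<N. cnj (w $ i) * (\<Sum>j<N. (\<Sum>m<N. complex_of_real (c m) * (v m $ i) * cnj (v m $ j)) * w $ j))"
    using w by (simp add: cinner_def spec_sum_def scalar_prod_def atLeast0LessThan)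
  also have "\<dots> = (\<Sum>i<N. \<Sum>j<N. \<Sum>m<N. complex_of_real (c m) * ((v m $ i * cnj (w $ i)) * (cnj (v m $ j) * w $ j)))"
    by (simp add: sum_distrib_right sum_distrib_left mult_ac)
  also have "\<dots> = (\<Sum>m<N. \<Sum>i<N. \<Sum>j<N. complex_of_real (c m) * ((v m $ i * cnj (w $ i)) * (cnj (v m $ j) * w $ j)))"
  proof -
    have "\<And>i. (\<Sum>j<N. \<Sum>m<N. complex_of_real (c m) * ((v m $ i * cnj (w $ i)) * (cnj (v m $ j) * w $ j)))
       = (\<Sum>m<N. \<Sum>j<N. complex_of_real (c m) * ((v m $ i * cnj (w $ i)) * (cnj (v m $ j) * w $ j)))"
      by (rule sum.swap)
    then show ?thesis by (simp only:) (rule sum.swap)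
  qed
  also have "\<dots> = (\<Sum>m<N. complex_of_real (c m) * ((\<Sum>i<N. v m $ i * cnj (w $ i)) * (\<Sum>j<N. cnj (v m $ j) * w $ j)))"
    unfolding sum_product by (simp only: sum_distrib_left)
  also have "\<dots> = (\<Sum>m<N. complex_of_real (c m) * (cnj (cinner (v m) w) * cinner (v m) w))"
    using w v by (intro sum.cong refl) (simp add: cinner_def cnj_sum)
  also have "\<dots> = (\<Sum>m<N. complex_of_real (c m * (cmod (cinner (v m) w))\<^sup>2))"
    by (intro sum.cong refl) (simp add: complex_norm_square[symmetric] mult.commute)
  finally show ?thesis by simp
qed



lemma adj_carrier: "U \<in> carrier_mat N N \<Longrightarrow> adj U \<in> carrier_mat N N"
  by (simp add: adj_def)

lemma spec_sum_carrier: "spec_sum N c v \<in> carrier_mat N N"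
  by (simp add: spec_sum_def)

lemma mtrace_minus: "A \<in> carrier_mat N N \<Longrightarrow> B \<in> carrier_mat N N \<Longrightarrow> mtrace (A - B) = mtrace A - mtrace B"
  by (simp add: mtrace_def sum_subtractf)

lemma trace_UrhoU:
  assumes U: "U \<in> carrier_mat N N" and xi: "\<And>n. n < N \<Longrightarrow> dim_vec (xi n) = N"
  shows "mtrace (spec_sum N lam xi * (U * spec_sum N p xi * adj U))
     = complex_of_real (\<Sum>n<N. lam n * (\<Sum>m<N. p m * (cmod (cinner (xi n) (U *\<^sub>v xi m)))\<^sup>2))"
proof -
  let ?r = "spec_sum N p xi"
  have r: "?r \<in> carrier_mat N N" by (rule spec_sum_carrier)
  have aU: "adj U \<in> carrier_mat N N" using U by (rule adj_carrier)
  have M: "U * ?r * adj U \<in> carrier_mat N N" using U r aU by (intro mult_carrier_mat) auto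
  have "mtrace (spec_sum N lam xi * (U * ?r * adj U)) =
     (\<Sum>n<N. complex_of_real (lam n) * cinner (xi n) ((U * ?r * adj U) *\<^sub>v xi n))"
    by (rule mtrace_spec_sum[OF M xi])
  also have "\<dots> = (\<Sum>n<N. complex_of_real (lam n) * complex_of_real (\<Sum>m<N. p m * (cmod (cinner (xi n) (U *\<^sub>v xi m)))\<^sup>2))"
  proof (rule sum.cong[OF refl])
    fix n assume n: "n \<in> {..<N}"
    define w where "w = adj U *\<^sub>v xi n"
    have xn: "xi n \<in> carrier_vec N" proof (rule carrier_vecI) show "dim_vec (xi n) = N" using n by (intro xi) simp qed
    have w: "dim_vec w = N" using aU by (simp add: w_def)
    have "(U * ?r * adj U) *\<^sub>v xi n = U *\<^sub>v (?r *\<^sub>v w)"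
    proof -
      have "(U * ?r * adj U) *\<^sub>v xi n = (U * ?r) *\<^sub>v w"
        unfolding w_def by (rule assoc_mult_mat_vec[of _ N N _ N]) (use U r aU xn in auto)
      also have "\<dots> = U *\<^sub>v (?r *\<^sub>v w)"
        by (rule assoc_mult_mat_vec[OF U r carrier_vecI[OF w]])
      finally show ?thesis .
    qed
    hence "cinner (xi n) ((U * ?r * adj U) *\<^sub>v xi n) = cinner w (?r *\<^sub>v w)"
      using cinner_adj[OF U, of "xi n" "?r *\<^sub>v w"] xi[of n] n r by (simp add: w_def[symmetric])
    also have "\<dots> = complex_of_real (\<Sum>m<N. p m * (cmod (cinner (xi m) w))\<^sup>2)"
      by (rule quad_spec_sum[OF w xi])
    also have "\<dots> = complex_of_real (\<Sum>m<N. p m * (cmod (cinner (xi n) (U *\<^sub>v xi m)))\<^sup>2)"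
    proof -
      have "\<And>m. m < N \<Longrightarrow> cmod (cinner (xi m) w) = cmod (cinner (xi n) (U *\<^sub>v xi m))"
      proof -
        fix m assume m: "m < N"
        have "cinner (xi n) (U *\<^sub>v xi m) = cinner w (xi m)"
          using cinner_adj[OF U, of "xi n" "xi m"] xi[of n] xi[of m] n m by (simp add: w_def)
        also have "\<dots> = cnj (cinner (xi m) w)" using cinner_cnj[of w "xi m"] w xi[of m] m by simp
        finally show "cmod (cinner (xi m) w) = cmod (cinner (xi n) (U *\<^sub>v xi m))" by simp
      qed
      then show ?thesis by simp
    qed
    finally show "complex_of_real (lam n) * cinner (xi n) ((U * ?r * adj U) *\<^sub>v xi n) = complex_of_real (lam n) * complex_of_real (\<Sum>m<N. p m * (cmod (cinner (xi n) (U *\<^sub>v xi m)))\<^sup>2)" by simp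
  qed
  also have "\<dots> = complex_of_real (\<Sum>n<N. lam n * (\<Sum>m<N. p m * (cmod (cinner (xi n) (U *\<^sub>v xi m)))\<^sup>2))"
    by (simp add: sum_distrib_left)
  finally show ?thesis .
qed

lemma ReDeltaQ:
  assumes U: "U \<in> carrier_mat N N" and xi: "\<And>n. n < N \<Longrightarrow> dim_vec (xi n) = N"
  shows "Re (DeltaQ (spec_sum N lam xi) (spec_sum N p xi) U)
    = (\<Sum>n<N. lam n * (qvec N p xi U) ! n) - Re (mtrace (spec_sum N lam xi * spec_sum N p xi))"
proof -
  let ?r = "spec_sum N p xi" and ?H = "spec_sum N lam xi"
  have r: "?r \<in> carrier_mat N N" "?H \<in> carrier_mat N N" by (rule spec_sum_carrier)+
  have aU: "adj U \<in> carrier_mat N N" using U by (rule adj_carrier)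
  have M: "U * ?r * adj U \<in> carrier_mat N N" using U r aU by auto
  have "DeltaQ ?H ?r U = mtrace (?H * (U * ?r * adj U)) - mtrace (?H * ?r)"
    unfolding DeltaQ_def using r M
    by (simp add: mult_minus_distrib_mat[OF r(2) M r(1)] mtrace_minus[of _ N])
  moreover have "(\<Sum>n<N. lam n * (qvec N p xi U) ! n) = (\<Sum>n<N. lam n * (\<Sum>m<N. p m * (cmod (cinner (xi n) (U *\<^sub>v xi m)))\<^sup>2))"
    by (intro sum.cong refl) (simp add: qvec_def)
  ultimately show ?thesis using trace_UrhoU[OF U xi] by simp
qed


theorem proposition1:
  fixes dO dK :: nat and lam :: "nat \<Rightarrow> real" and xi :: "nat \<Rightarrow> complex vec"
    and H \<rho> U1 :: "complex mat" and \<beta> :: real and p :: "nat \<Rightarrow> real" and Psi :: "complex vec"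
  assumes "dO > 0" and "dK > 0"
    and "onb (dO * dK) xi"
    and "\<And>n m. n \<le> m \<Longrightarrow> m < dO * dK \<Longrightarrow> lam n \<le> lam m"
    and "H = spec_sum (dO * dK) lam xi"
    and "\<beta> > 0"
    and "\<rho> = gibbs \<beta> H"
    and "\<rho> = spec_sum (dO * dK) p xi"
    and "dim_vec Psi = dO" and "cinner Psi Psi = 1"
    and "U1 \<in> Umaj dO dK xi Psi"
    and "sorted_wrt (\<ge>) (qvec (dO * dK) p xi U1)"
    and "\<And>U. U \<in> Umaj dO dK xi Psi \<Longrightarrow> majorized (qvec (dO * dK) p xi U) (qvec (dO * dK) p xi U1)"
  shows "\<forall>U \<in> Umaj dO dK xi Psi. Re (DeltaQ H \<rho> U1) \<le> Re (DeltaQ H \<rho> U)"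
proof
  let ?N = "dO * dK"
  have xid: "\<And>n. n < ?N \<Longrightarrow> dim_vec (xi n) = ?N" using assms(3) by (simp add: onb_def)
  have U1C: "U1 \<in> carrier_mat ?N ?N" using assms(11) by (simp add: Umaj_def unitary_def)
  fix U assume UU: "U \<in> Umaj dO dK xi Psi"
  have UC: "U \<in> carrier_mat ?N ?N" using UU by (simp add: Umaj_def unitary_def)
  have len: "length (qvec ?N p xi U) = ?N" by (simp add: qvec_def)
  have ineq: "(\<Sum>n<?N. lam n * (qvec ?N p xi U1) ! n) \<le> (\<Sum>n<?N. lam n * (qvec ?N p xi U) ! n)"
    by (rule maj_ineq[OF assms(4) len assms(12) assms(13)[OF UU]])
  show "Re (DeltaQ H \<rho> U1) \<le> Re (DeltaQ H \<rho> U)"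
    using ineq ReDeltaQ[OF UC xid, where lam=lam and p=p] ReDeltaQ[OF U1C xid, where lam=lam and p=p] assms(5) assms(8) by simp
qed

end
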